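(* Let $\Gamma=(K_n,\sigma)$ be a signed complete graph and let $\{X_1,\ldots,X_p,X_{p+1},\ldots,X_{p+q}\}$ be a partition of $V(\Gamma)$ into nonempty sets with $|X_i|=n_i$, such that: for every $i\ne j$ all edges between $X_i$ and $X_j$ have the same sign $\epsilon_{ij}\in\{+1,-1\}$; all edges inside $X_i$ are positive for $i=1,\ldots,p$; and all edges inside $X_i$ are negative for $i=p+1,\ldots,p+q$. Let $B=(b_{ij})$ be the $(p+q)\times(p+q)$ quotient matrix, i.e. $b_{ij}$ is the (constant) row sum of the submatrix of $A(\Gamma)$ with rows indexed by $X_i$ and columns by $X_j$ (so $b_{ii}=n_i-1$ for $i\le p$, $b_{ii}=-(n_i-1)$ for $i>p$, and $b_{ij}=\epsilon_{ij}n_j$ for $i\neq j$). If $m_1=\sum_{i=1}^p n_i$ and $m_2=\sum_{i=p+1}^{p+q}n_i$, then $$\varphi(\Gamma,\lambda)=(\lambda+1)^{m_1-p}(\lambda-1)^{m_2-q}\varphi(B,\lambda).$$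
   Context: A signed complete graph $(K_n,\sigma)$ assigns a sign $\pm$ to each edge of $K_n$; its adjacency matrix $A(\Gamma)$ has off-diagonal entries $\sigma(v_iv_j)\in\{1,-1\}$ and zero diagonal. $\varphi(M,\lambda)=\det(\lambda I-M)$ denotes the characteristic polynomial of a matrix $M$, and $\varphi(\Gamma,\lambda)=\varphi(A(\Gamma),\lambda)$. *)

theory Defs
  imports "Jordan_Normal_Form.Char_Poly"
begin

definition signed_complete_adj :: "nat \<Rightarrow> real mat \<Rightarrow> bool" where
  "signed_complete_adj n A \<longleftrightarrow> A \<in> carrier_mat n n \<and>
     (\<forall>i<n. A $$ (i,i) = 0) \<and>
     (\<forall>i<n. \<forall>j<n. i \<noteq> j \<longrightarrow> (A $$ (i,j) = 1 \<or> A $$ (i,j) = -1) \<and> A $$ (i,j) = A $$ (j,i))"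

definition cell :: "nat \<Rightarrow> (nat \<Rightarrow> nat) \<Rightarrow> nat \<Rightarrow> nat set" where
  "cell n part i = {v. v < n \<and> part v = i}"

text \<open>Quotient matrix: entry (i,j) is the row sum of the block X_i x X_j,
  taken at a (any) representative row u of X_i.\<close>
definition quotient_matrix :: "real mat \<Rightarrow> (nat \<Rightarrow> nat) \<Rightarrow> nat \<Rightarrow> real mat" where
  "quotient_matrix A part k = mat k k (\<lambda>(i,j).
     (\<Sum>v\<in>cell (dim_row A) part j. A $$ (SOME u. u \<in> cell (dim_row A) part i, v)))"

end

theory Submission imports Defs begin

lemma ifmult: "(if b then 1 else 0) * (a::real) = (if b then a else 0)" by simp

lemma core_det:
  fixes c :: "nat \<Rightarrow> nat \<Rightarrow> real" and x :: real
  assumes part: "\<forall>v<n. part v < k"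
    and nz: "\<forall>i<k. x + c i i \<noteq> 0"
  shows "det (mat n n (\<lambda>(u,v). (if u=v then x + c (part u) (part u) else 0) - c (part u) (part v)))
         * (\<Prod>i<k. x + c i i)
       = (\<Prod>u<n. x + c (part u) (part u))
         * det (mat k k (\<lambda>(i,j). (if i=j then x + c i i else 0) - real (card {v. v<n \<and> part v = j}) * c i j))"
proof -
  define Lm where "Lm = mat n n (\<lambda>(u,v). if u=v then x + c (part u) (part u) else 0)"
  define S where "S = mat n k (\<lambda>(u,i). if part u = i then 1 else (0::real))"
  define Y where "Y = mat k n (\<lambda>(i,v). c i (part v))"
  define YL where "YL = mat k n (\<lambda>(i,v). c i (part v) / (x + c (part v) (part v)))"
  define Dk where "Dk = mat k k (\<lambda>(i,j). if i=j then x + c i i else 0)"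
  define G where "G = mat k k (\<lambda>(i,j). (if i=j then 1 else 0) - real (card {v. v<n \<and> part v = j}) * c i j / (x + c j j))"
  define M where "M = four_block_mat Lm S Y (1\<^sub>m k)"
  define R where "R = four_block_mat (1\<^sub>m n) (0\<^sub>m n k) (-Y) (1\<^sub>m k)"
  define Q where "Q = four_block_mat (1\<^sub>m n) (0\<^sub>m n k) (-YL) (1\<^sub>m k)"
  define AL where "AL = mat n n (\<lambda>(u,v). (if u=v then x + c (part u) (part u) else 0) - c (part u) (part v))"
  define BL where "BL = mat k k (\<lambda>(i,j). (if i=j then x + c i i else 0) - real (card {v. v<n \<and> part v = j}) * c i j)"
  have cLm: "Lm \<in> carrier_mat n n" and cS: "S \<in> carrier_mat n k" and cY: "Y \<in> carrier_mat k n"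
    and cYL: "YL \<in> carrier_mat k n" and cDk: "Dk \<in> carrier_mat k k" and cG: "G \<in> carrier_mat k k"
    and cAL: "AL \<in> carrier_mat n n" and cBL: "BL \<in> carrier_mat k k"
    by (auto simp: Lm_def S_def Y_def YL_def Dk_def G_def AL_def BL_def)
  have cM: "M \<in> carrier_mat (n+k) (n+k)" unfolding M_def using cLm cS cY by auto
  have cR: "R \<in> carrier_mat (n+k) (n+k)" unfolding R_def using cY by auto
  have cQ: "Q \<in> carrier_mat (n+k) (n+k)" unfolding Q_def using cYL by auto
  have detR: "det R = 1" unfolding R_def
    by (subst det_four_block_mat_upper_right_zero[of _ n _ k], insert cY, auto)
  have detQ: "det Q = 1" unfolding Q_def
    by (subst det_four_block_mat_upper_right_zero[of _ n _ k], insert cYL, auto)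
  have cmY: "- Y \<in> carrier_mat k n" "- YL \<in> carrier_mat k n" using cY cYL by auto
  have b1: "Lm * 1\<^sub>m n + S * - Y = AL"
    by (rule eq_matI, insert cLm cS cY part, auto simp: Lm_def S_def Y_def AL_def scalar_prod_def ifmult sum.delta' cong: if_cong)
  have b2: "Lm * 0\<^sub>m n k + S * 1\<^sub>m k = S" by (rule eq_matI, insert cLm cS, auto)
  have b3: "Y * 1\<^sub>m n + 1\<^sub>m k * - Y = 0\<^sub>m k n" by (rule eq_matI, insert cY, auto)
  have b4: "Y * 0\<^sub>m n k + 1\<^sub>m k * 1\<^sub>m k = 1\<^sub>m k" by (rule eq_matI, insert cY, auto)
  have MR: "M * R = four_block_mat AL S (0\<^sub>m k n) (1\<^sub>m k)"
    unfolding M_def R_def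
    by (subst mult_four_block_mat[OF cLm cS cY one_carrier_mat one_carrier_mat zero_carrier_mat cmY(1) one_carrier_mat],
       insert cY cS, simp only: b1 b2 b3 b4)
  have YLLm: "-YL * Lm + 1\<^sub>m k * Y = 0\<^sub>m k n"
  proof (rule eq_matI)
    fix i v assume iv: "i < dim_row (0\<^sub>m k n :: real mat)" "v < dim_col (0\<^sub>m k n :: real mat)"
    then have "part v < k" using part by auto
    then have "x + c (part v) (part v) \<noteq> 0" using nz by auto
    then show "(-YL * Lm + 1\<^sub>m k * Y) $$ (i, v) = 0\<^sub>m k n $$ (i, v)"
      using iv cY cYL cLm by (auto simp: YL_def Lm_def Y_def scalar_prod_def if_distrib sum.delta cong: if_cong)
  qed (insert cY cYL, auto)
  have YLS: "-YL * S + 1\<^sub>m k * 1\<^sub>m k = G"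
  proof (rule eq_matI)
    fix i j assume ij: "i < dim_row G" "j < dim_col G"
    have "(\<Sum>w = 0..<n. - (c i (part w) / (x + c (part w) (part w))) * (if part w = j then 1 else 0))
       = (\<Sum>w \<in> {v. v<n \<and> part v = j}. - (c i j / (x + c j j)))"
      by (rule sum.mono_neutral_cong_right, auto)
    then show "(-YL * S + 1\<^sub>m k * 1\<^sub>m k) $$ (i, j) = G $$ (i, j)"
      using ij cYL cS cG by (auto simp: YL_def S_def G_def scalar_prod_def sum_negf)
  qed (insert cYL cS cG, auto)
  have q1: "1\<^sub>m n * Lm + 0\<^sub>m n k * Y = Lm" by (rule eq_matI, insert cLm cY, auto)
  have q2: "1\<^sub>m n * S + 0\<^sub>m n k * 1\<^sub>m k = S" by (rule eq_matI, insert cS, auto)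
  have QM: "Q * M = four_block_mat Lm S (0\<^sub>m k n) G"
    unfolding Q_def M_def
    by (subst mult_four_block_mat[OF one_carrier_mat zero_carrier_mat cmY(2) one_carrier_mat cLm cS cY one_carrier_mat],
       simp only: q1 q2 YLLm YLS)
  have GD: "G * Dk = BL"
  proof (rule eq_matI)
    fix i j assume ij: "i < dim_row BL" "j < dim_col BL"
    then have "x + c j j \<noteq> 0" using nz cBL by auto
    note nzj = this
    have "(G * Dk) $$ (i, j) = G $$ (i,j) * (x + c j j)"
      using ij cG cDk cBL by (auto simp: Dk_def scalar_prod_def if_distrib sum.delta' cong: if_cong)
    also have "\<dots> = BL $$ (i, j)"
      using ij cG cBL nzj by (auto simp: G_def BL_def left_diff_distrib)
    finally show "(G * Dk) $$ (i, j) = BL $$ (i, j)" .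
  qed (insert cG cDk cBL, auto)
  have "det AL = det M"
  proof -
    have "det (M * R) = det M" using det_mult[OF cM cR] detR by simp
    moreover have "det (M*R) = det AL"
      unfolding MR by (subst det_four_block_mat_lower_left_zero[of _ n _ k], insert cAL cS, auto)
    ultimately show ?thesis by simp
  qed
  moreover have "det M = det Lm * det G"
  proof -
    have "det (Q * M) = det M" using det_mult[OF cQ cM] detQ by simp
    moreover have "det (Q*M) = det Lm * det G"
      unfolding QM by (subst det_four_block_mat_lower_left_zero[of _ n _ k], insert cLm cS cG, auto)
    ultimately show ?thesis by simp
  qed
  moreover have "det BL = det G * det Dk" using det_mult[OF cG cDk] GD by simp
  moreover have "det Lm = (\<Prod>u<n. x + c (part u) (part u))"
    by (subst det_upper_triangular[OF _ cLm], auto simp: upper_triangular_def Lm_def prod_list_diag_prod lessThan_atLeast0)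
  moreover have "det Dk = (\<Prod>i<k. x + c i i)"
    by (subst det_upper_triangular[OF _ cDk], auto simp: upper_triangular_def Dk_def prod_list_diag_prod lessThan_atLeast0)
  ultimately show ?thesis unfolding AL_def[symmetric] BL_def[symmetric] by simp
qed


lemma prod_split_pq:
  fixes f :: "nat \<Rightarrow> 'a::comm_monoid_mult"
  shows "(\<Prod>i<p+q. f i) = (\<Prod>i<p. f i) * (\<Prod>i=p..<p+q. f i)"
  by (simp add: lessThan_atLeast0 prod.atLeastLessThan_concat)

theorem theorem3p2:
  fixes A :: "real mat" and part :: "nat \<Rightarrow> nat" and n p q :: nat
  assumes adj: "signed_complete_adj n A"
    and part_range: "\<forall>v<n. part v < p + q"
    and nonempty: "\<forall>i<p + q. cell n part i \<noteq> {}"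
    and between: "\<forall>i<p + q. \<forall>j<p + q. i \<noteq> j \<longrightarrow>
        (\<exists>e::real. (e = 1 \<or> e = -1) \<and>
           (\<forall>u\<in>cell n part i. \<forall>v\<in>cell n part j. A $$ (u,v) = e))"
    and inside_pos: "\<forall>i<p. \<forall>u\<in>cell n part i. \<forall>v\<in>cell n part i. u \<noteq> v \<longrightarrow> A $$ (u,v) = 1"
    and inside_neg: "\<forall>i. p \<le> i \<and> i < p + q \<longrightarrow>
        (\<forall>u\<in>cell n part i. \<forall>v\<in>cell n part i. u \<noteq> v \<longrightarrow> A $$ (u,v) = -1)"
  shows "char_poly A =
    [:1, 1:] ^ ((\<Sum>i<p. card (cell n part i)) - p) *
    [:-1, 1:] ^ ((\<Sum>i=p..<p+q. card (cell n part i)) - q) *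
    char_poly (quotient_matrix A part (p + q))"
proof -
  define k where "k = p + q"
  define rep where "rep i = (SOME u. u \<in> cell n part i)" for i
  define c :: "nat \<Rightarrow> nat \<Rightarrow> real" where
    "c i j = (if i = j then (if i < p then 1 else -1) else A $$ (rep i, rep j))" for i j
  define B where "B = quotient_matrix A part k"
  have cA: "A \<in> carrier_mat n n" and A0: "\<forall>i<n. A $$ (i,i) = 0"
    using adj unfolding signed_complete_adj_def by auto
  have part: "\<forall>v<n. part v < k" using part_range k_def by auto
  have rep: "rep i \<in> cell n part i" if "i < k" for i
    unfolding rep_def using nonempty that k_def by (metis all_not_in_conv someI_ex)
  have cell_eq: "cell n part j = {v. v<n \<and> part v = j}" for j by (simp add: cell_def)
  have cii: "c i i = 1 \<or> c i i = -1" for i by (simp add: c_def)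
  have F1: "A $$ (u,v) = c (part u) (part v) - (if u=v then c (part u) (part u) else 0)"
    if uv: "u < n" "v < n" for u v
  proof (cases "u = v")
    case True then show ?thesis using A0 uv by simp
  next
    case ne: False
    show ?thesis
    proof (cases "part u = part v")
      case True
      have uc: "u \<in> cell n part (part u)" "v \<in> cell n part (part u)" using uv True by (auto simp: cell_def)
      show ?thesis
      proof (cases "part u < p")
        case True then show ?thesis using inside_pos uc ne \<open>part u = part v\<close> by (auto simp: c_def)
      next
        case False
        moreover have "part u < p + q" using part uv k_def by auto
        ultimately have "A $$ (u,v) = -1" using inside_neg uc ne by (meson not_le)
        then show ?thesis using \<open>\<not> part u < p\<close> ne \<open>part u = part v\<close> by (simp add: c_def)
      qed
    next
      case False
      have lt: "part u < p + q" "part v < p + q" using part uv k_def by auto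
      then obtain e where e: "\<forall>u'\<in>cell n part (part u). \<forall>v'\<in>cell n part (part v). A $$ (u',v') = e"
        using between False by blast
      have "u \<in> cell n part (part u)" "v \<in> cell n part (part v)" using uv by (auto simp: cell_def)
      moreover have "rep (part u) \<in> cell n part (part u)" "rep (part v) \<in> cell n part (part v)"
        using rep lt k_def by auto
      ultimately show ?thesis using e False ne by (auto simp: c_def)
    qed
  qed
  have F2: "B = mat k k (\<lambda>(i,j). real (card {v. v<n \<and> part v = j}) * c i j - (if i=j then c i i else 0))"
  proof (rule eq_matI)
    fix i j assume ij: "i < dim_row (mat k k (\<lambda>(i,j). real (card {v. v<n \<and> part v = j}) * c i j - (if i=j then c i i else 0)))"
      "j < dim_col (mat k k (\<lambda>(i,j). real (card {v. v<n \<and> part v = j}) * c i j - (if i=j then c i i else 0)))"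
    then have ik: "i < k" "j < k" by auto
    have ri: "rep i < n" "part (rep i) = i" using rep[OF ik(1)] by (auto simp: cell_def)
    have dA: "dim_row A = n" using cA by simp
    have "B $$ (i,j) = (\<Sum>v\<in>{v. v<n \<and> part v = j}. A $$ (rep i, v))"
      unfolding B_def quotient_matrix_def using ik dA by (simp add: rep_def cell_eq)
    also have "\<dots> = (\<Sum>v\<in>{v. v<n \<and> part v = j}. c i j - (if rep i = v then c i i else 0))"
      by (rule sum.cong, simp, subst F1, insert ri, auto)
    also have "\<dots> = real (card {v. v<n \<and> part v = j}) * c i j - (if i=j then c i i else 0)"
      using ri by (auto simp: sum_subtractf sum.delta)
    finally show "B $$ (i,j) = mat k k (\<lambda>(i,j). real (card {v. v<n \<and> part v = j}) * c i j - (if i=j then c i i else 0)) $$ (i,j)"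
      using ik by simp
  qed (auto simp: B_def quotient_matrix_def)
  have cB: "B \<in> carrier_mat k k" using F2 by simp
  define P1 where "P1 = char_poly A * (\<Prod>i<k. [:c i i, 1:])"
  define P2 where "P2 = (\<Prod>u<n. [:c (part u) (part u), 1:]) * char_poly B"
  have evalA: "poly (char_poly A) x = det (mat n n (\<lambda>(u,v). (if u=v then x + c (part u) (part u) else 0) - c (part u) (part v)))" for x
    unfolding char_poly_matrix[OF cA]
    by (rule arg_cong[of _ _ det], rule eq_matI, insert cA, auto simp: char_matrix_def F1)
  have evalB: "poly (char_poly B) x = det (mat k k (\<lambda>(i,j). (if i=j then x + c i i else 0) - real (card {v. v<n \<and> part v = j}) * c i j))" for x
    unfolding char_poly_matrix[OF cB]
    by (rule arg_cong[of _ _ det], rule eq_matI, insert cB, auto simp: char_matrix_def F2)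
  have agree: "poly P1 x = poly P2 x" if x: "x \<noteq> 1" "x \<noteq> -1" for x
  proof -
    have nz: "\<forall>i<k. x + c i i \<noteq> 0" using cii x by (metis add.commute add_eq_0_iff eq_neg_iff_add_eq_0)
    show ?thesis unfolding P1_def P2_def poly_mult poly_prod evalA evalB
      using core_det[of n part k x c, OF part nz] by (simp add: add.commute)
  qed
  have P12: "P1 = P2"
  proof (rule ccontr)
    assume "P1 \<noteq> P2"
    then have "P1 - P2 \<noteq> 0" by simp
    then have "finite {x. poly (P1 - P2) x = 0}" by (rule poly_roots_finite)
    moreover have "UNIV - {1, -1} \<subseteq> {x. poly (P1 - P2) x = 0}" using agree by auto
    ultimately have "finite (UNIV - {1, -1::real})" by (rule rev_finite_subset)
    then have "finite (UNIV :: real set)" by simp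
    then show False using infinite_UNIV_char_0 by blast
  qed
  define X where "X = ([:1, 1:] :: real poly)"
  define Z where "Z = ([:-1, 1:] :: real poly)"
  define m1 where "m1 = (\<Sum>i<p. card (cell n part i))"
  define m2 where "m2 = (\<Sum>i=p..<p+q. card (cell n part i))"
  have cpos: "card (cell n part i) \<ge> 1" if "i < k" for i
    using nonempty that k_def by (simp add: Suc_le_eq card_gt_0_iff cell_def)
  have m1p: "m1 \<ge> p"
  proof -
    have "(\<Sum>i<p. (1::nat)) \<le> m1" unfolding m1_def by (rule sum_mono, insert cpos k_def, auto)
    then show ?thesis by simp
  qed
  have m2q: "m2 \<ge> q"
  proof -
    have "(\<Sum>i=p..<p+q. (1::nat)) \<le> m2" unfolding m2_def by (rule sum_mono, insert cpos k_def, auto)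
    then show ?thesis by simp
  qed
  have prodk: "(\<Prod>i<k. [:c i i, 1:]) = X ^ p * Z ^ q"
  proof -
    have "(\<Prod>i<k. [:c i i, 1:]) = (\<Prod>i<p. [:c i i, 1:]) * (\<Prod>i=p..<p+q. [:c i i, 1:])"
      unfolding k_def by (rule prod_split_pq)
    also have "(\<Prod>i<p. [:c i i, 1:]) = (\<Prod>i<p. X)" by (rule prod.cong, auto simp: c_def X_def)
    also have "(\<Prod>i=p..<p+q. [:c i i, 1:]) = (\<Prod>i=p..<p+q. Z)" by (rule prod.cong, auto simp: c_def Z_def)
    finally show ?thesis by simp
  qed
  have prodn: "(\<Prod>u<n. [:c (part u) (part u), 1:]) = X ^ m1 * Z ^ m2"
  proof -
    have "(\<Prod>u<n. [:c (part u) (part u), 1:]) = (\<Prod>i<k. \<Prod>u\<in>{u. u \<in> {..<n} \<and> part u = i}. [:c (part u) (part u), 1:])"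
      by (rule prod.group[symmetric], insert part, auto)
    also have "\<dots> = (\<Prod>i<k. [:c i i, 1:] ^ card (cell n part i))"
    proof (rule prod.cong[OF refl])
      fix i assume "i \<in> {..<k}"
      have "{u. u \<in> {..<n} \<and> part u = i} = cell n part i" by (auto simp: cell_def)
      then show "(\<Prod>u\<in>{u. u \<in> {..<n} \<and> part u = i}. [:c (part u) (part u), 1:]) = [:c i i, 1:] ^ card (cell n part i)"
        by (simp add: cell_def)
    qed
    also have "\<dots> = (\<Prod>i<p. [:c i i, 1:] ^ card (cell n part i)) * (\<Prod>i=p..<p+q. [:c i i, 1:] ^ card (cell n part i))"
      unfolding k_def by (rule prod_split_pq)
    also have "(\<Prod>i<p. [:c i i, 1:] ^ card (cell n part i)) = (\<Prod>i<p. X ^ card (cell n part i))"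
      by (rule prod.cong, auto simp: c_def X_def)
    also have "\<dots> = X ^ m1" unfolding m1_def by (simp add: power_sum)
    also have "(\<Prod>i=p..<p+q. [:c i i, 1:] ^ card (cell n part i)) = (\<Prod>i=p..<p+q. Z ^ card (cell n part i))"
      by (rule prod.cong, auto simp: c_def Z_def)
    also have "\<dots> = Z ^ m2" unfolding m2_def by (simp add: power_sum)
    finally show ?thesis .
  qed
  have "char_poly A * (X ^ p * Z ^ q) = (X ^ (m1 - p) * Z ^ (m2 - q) * char_poly B) * (X ^ p * Z ^ q)"
  proof -
    have "char_poly A * (X ^ p * Z ^ q) = X ^ m1 * Z ^ m2 * char_poly B"
      using P12 unfolding P1_def P2_def prodk prodn .
    also have "X ^ m1 = X ^ (m1 - p) * X ^ p" using m1p by (simp add: power_add[symmetric])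
    also have "Z ^ m2 = Z ^ (m2 - q) * Z ^ q" using m2q by (simp add: power_add[symmetric])
    finally show ?thesis by (simp add: ac_simps)
  qed
  moreover have "X ^ p * Z ^ q \<noteq> 0" by (simp add: X_def Z_def)
  ultimately have "char_poly A = X ^ (m1 - p) * Z ^ (m2 - q) * char_poly B"
    by (metis mult_right_cancel)
  then show ?thesis unfolding X_def Z_def m1_def m2_def B_def k_def .
qed

end
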